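(* Let $d\ge2$, let $\Omega=\{x\in\mathbb R^d:\ \ell_j(x)>b_j,\ j=1,\dots,m\}$ be a nonempty bounded open convex polytope, and suppose $\mathfrak E=\{e_1,\dots,e_p\}\subset\mathbb R^d$ is weakly incoming to $\Omega$. Let $x_0\in\overline\Omega$ and $k=\mathrm c(x_0)$. Then there exist $r>0$ and $I\subset\{1,\dots,m\}$ with $\#I=k$ such that $$\Omega\cap B(x_0,r)=B(x_0,r)\cap\Big(\bigcap_{i\in I}H_i^+\Big).$$ Further, there exist $\beta_1,\dots,\beta_k\in\{1,\dots,p\}$, $\theta_1,\dots,\theta_k\in\{\pm1\}$ and a bijection $\{1,\dots,k\}\ni n\mapsto i_n\in I$ such that for all $n\in\{1,\dots,k\}$: $\theta_ne_{\beta_n}$ is strictly incoming to $H_{i_n}$, and $\theta_ne_{\beta_n}$ is incoming to $H_{i_m}$ for all $m>n$.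
   Context: $\ell_j$ are linear forms on $\mathbb R^d$ and $b_j$ reals. $B(x_0,r)$ is the open ball. Define $\mathrm c:\mathbb R^d\to\mathbb N\cup\{+\infty\}$ by $\mathrm c(x)=0$ if $x\in\Omega$, $+\infty$ if $x\notin\overline\Omega$, $\#\{i:\ell_i(x)=b_i\}$ if $x\in\partial\Omega$. $\mathfrak E$ is weakly incoming to $\Omega$ if for every $x_0\in\partial\Omega$ there exist $\epsilon>0$, $\theta\in\{\pm1\}$, $e\in\mathfrak E$ with $\mathrm c(x_0+\theta te)<\mathrm c(x_0)$ for all $t\in]0,\epsilon]$. For each $k$, $H_k=\ker\ell_k$, $H_k^+=\{y:\ell_k(y)>b_k\}$, and $\nu_k$ is the unit vector orthogonal to $H_k$ with $\ell_k(\nu_k)>0$. A vector $u\ne0$ is incoming to $H_k$ if $\langle u,\nu_k\rangle\ge0$, and strictly incoming to $H_k$ if $\langle u,\nu_k\rangle>0$. *)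

theory Defs
  imports "HOL-Analysis.Analysis" "HOL-Library.Extended_Nat"
begin

definition polytope :: "(nat \<Rightarrow> 'a::euclidean_space \<Rightarrow> real) \<Rightarrow> (nat \<Rightarrow> real) \<Rightarrow> nat \<Rightarrow> 'a set" where
  "polytope l b m = {x. \<forall>j\<in>{1..m}. l j x > b j}"

definition cnt :: "(nat \<Rightarrow> 'a::euclidean_space \<Rightarrow> real) \<Rightarrow> (nat \<Rightarrow> real) \<Rightarrow> nat \<Rightarrow> 'a \<Rightarrow> enat" where
  "cnt l b m x =
     (if x \<in> polytope l b m then 0
      else if x \<notin> closure (polytope l b m) then \<infinity>
      else enat (card {i\<in>{1..m}. l i x = b i}))"

definition weakly_incoming :: "'a::euclidean_space set \<Rightarrow> (nat \<Rightarrow> 'a \<Rightarrow> real) \<Rightarrow> (nat \<Rightarrow> real) \<Rightarrow> nat \<Rightarrow> bool" where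
  "weakly_incoming E l b m \<longleftrightarrow>
     (\<forall>x0\<in>frontier (polytope l b m). \<exists>\<epsilon>>0. \<exists>\<theta>\<in>{-1, 1::real}. \<exists>e\<in>E.
        \<forall>t\<in>{0<..\<epsilon>}. cnt l b m (x0 + (\<theta> * t) *\<^sub>R e) < cnt l b m x0)"

definition Hplus :: "('a \<Rightarrow> real) \<Rightarrow> real \<Rightarrow> 'a set" where
  "Hplus l c = {y. l y > c}"

definition unit_normal :: "('a::euclidean_space \<Rightarrow> real) \<Rightarrow> 'a" where
  "unit_normal l = (SOME v. norm v = 1 \<and> (\<forall>y. l y = 0 \<longrightarrow> v \<bullet> y = 0) \<and> l v > 0)"

definition incoming :: "'a::euclidean_space \<Rightarrow> ('a \<Rightarrow> real) \<Rightarrow> bool" where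
  "incoming u l \<longleftrightarrow> u \<noteq> 0 \<and> u \<bullet> unit_normal l \<ge> 0"

definition strictly_incoming :: "'a::euclidean_space \<Rightarrow> ('a \<Rightarrow> real) \<Rightarrow> bool" where
  "strictly_incoming u l \<longleftrightarrow> u \<noteq> 0 \<and> u \<bullet> unit_normal l > 0"

end

theory Submission
  imports Defs
begin

lemma lin_add_scale:
  fixes f :: "'a::euclidean_space \<Rightarrow> real"
  shows "linear f \<Longrightarrow> f (x + t *\<^sub>R u) = f x + t * f u"
  by (simp add: linear_add linear_cmul)

lemma closure_ge:
  fixes l :: "nat \<Rightarrow> 'a::euclidean_space \<Rightarrow> real"
  assumes lin: "\<forall>j\<in>{1..m}. linear (l j)" and x: "x \<in> closure (polytope l b m)" and j: "j \<in> {1..m}"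
  shows "l j x \<ge> b j"
proof -
  have "continuous_on UNIV (l j)" using lin j
    by (simp add: linear_continuous_on linear_conv_bounded_linear)
  hence "closed {y. b j \<le> l j y}" by (intro closed_Collect_le continuous_on_const) auto
  moreover have "polytope l b m \<subseteq> {y. b j \<le> l j y}" using j by (auto simp: polytope_def intro: less_imp_le)
  ultimately have "closure (polytope l b m) \<subseteq> {y. b j \<le> l j y}" by (rule closure_minimal[rotated])
  thus ?thesis using x by auto
qed

lemma polytope_open:
  fixes l :: "nat \<Rightarrow> 'a::euclidean_space \<Rightarrow> real"
  assumes lin: "\<forall>j\<in>{1..m}. linear (l j)"
  shows "open (polytope l b m)"
proof -
  have eq: "polytope l b m = (\<Inter>j\<in>{1..m}. {y. b j < l j y})" by (auto simp: polytope_def)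
  have "\<forall>j\<in>{1..m}. open {y. b j < l j y}"
  proof
    fix j assume j: "j \<in> {1..m}"
    have "continuous_on UNIV (l j)" using lin j
      by (simp add: linear_continuous_on linear_conv_bounded_linear)
    thus "open {y. b j < l j y}" by (intro open_Collect_less continuous_on_const) auto
  qed
  thus ?thesis unfolding eq by (intro open_INT) auto
qed

lemma levels:
  fixes l :: "nat \<Rightarrow> 'a::euclidean_space \<Rightarrow> real"
  assumes lin: "\<forall>j\<in>{1..m}. linear (l j)" and wi: "weakly_incoming E l b m"
  shows "x \<in> closure (polytope l b m) \<Longrightarrow> \<exists>\<rho>::nat\<Rightarrow>nat. \<exists>uu. \<forall>i\<in>{i\<in>{1..m}. l i x = b i}.
     (\<exists>\<theta>\<in>{-1,1::real}. \<exists>e\<in>E. uu i = \<theta> *\<^sub>R e) \<and> l i (uu i) > 0 \<and>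
     (\<forall>j\<in>{i\<in>{1..m}. l i x = b i}. \<rho> i \<le> \<rho> j \<longrightarrow> l j (uu i) \<ge> 0)"
proof (induction "card {i\<in>{1..m}. l i x = b i}" arbitrary: x rule: less_induct)
  case less
  define A where "A = {i\<in>{1..m}. l i x = b i}"
  have finA: "finite A" unfolding A_def by auto
  show ?case
  proof (cases "A = {}")
    case True
    show ?thesis unfolding A_def[symmetric] True
      by (intro exI[of _ "\<lambda>_. 0::nat"] exI[of _ "\<lambda>_. 0"]) simp
  next
    case False
    then obtain i0 where i0: "i0 \<in> A" by auto
    have notin: "x \<notin> polytope l b m" using i0 unfolding A_def polytope_def by force
    hence fr: "x \<in> frontier (polytope l b m)" using less.prems polytope_open[OF lin]
      by (simp add: frontier_def interior_open)
    from wi fr obtain \<epsilon> \<theta> e where \<epsilon>: "\<epsilon>>0" and \<theta>: "\<theta> \<in> {-1,1::real}" and e: "e \<in> E"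
      and dec: "\<forall>t\<in>{0<..\<epsilon>}. cnt l b m (x + (\<theta>*t) *\<^sub>R e) < cnt l b m x"
      unfolding weakly_incoming_def by blast
    define u where "u = \<theta> *\<^sub>R e"
    have cx: "cnt l b m x = enat (card A)" using notin less.prems by (simp add: cnt_def A_def)
    have lt: "cnt l b m (x + t *\<^sub>R u) < enat (card A)" if "0<t" "t\<le>\<epsilon>" for t
    proof -
      have "cnt l b m (x + (\<theta>*t) *\<^sub>R e) < cnt l b m x" using dec that by auto
      thus ?thesis using cx by (simp add: u_def mult.commute)
    qed
    have incl: "x + t *\<^sub>R u \<in> closure (polytope l b m)" if "0<t" "t\<le>\<epsilon>" for t
      using lt[OF that] closure_subset by (auto simp: cnt_def split: if_splits)
    have lval: "l i (x + t *\<^sub>R u) = l i x + t * l i u" if "i\<in>{1..m}" for i t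
      using lin that by (simp add: lin_add_scale)
    have nonneg: "l i u \<ge> 0" if "i \<in> A" for i
    proof -
      have iA: "i \<in> {1..m}" "l i x = b i" using that by (auto simp: A_def)
      have "l i (x + \<epsilon> *\<^sub>R u) \<ge> b i" using closure_ge[OF lin incl[OF \<epsilon> order.refl] iA(1)] .
      hence "\<epsilon> * l i u \<ge> 0" using lval[OF iA(1)] iA by auto
      thus ?thesis using \<epsilon> by (simp add: zero_le_mult_iff)
    qed
    have pos: "\<exists>i\<in>A. l i u > 0"
    proof -
      define y where "y = x + \<epsilon> *\<^sub>R u"
      show ?thesis
      proof (cases "y \<in> polytope l b m")
        case True
        have iA: "i0 \<in> {1..m}" "l i0 x = b i0" using i0 by (auto simp: A_def)
        hence "l i0 y > b i0" using True by (auto simp: polytope_def)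
        hence "\<epsilon> * l i0 u > 0" using lval[OF iA(1)] iA by (auto simp: y_def)
        thus ?thesis using \<epsilon> i0 by (auto simp: zero_less_mult_iff)
      next
        case False
        have "y \<in> closure (polytope l b m)" using incl[OF \<epsilon> order.refl] by (simp add: y_def)
        hence "enat (card {i\<in>{1..m}. l i y = b i}) < enat (card A)"
          using lt[OF \<epsilon> order.refl] False by (simp add: cnt_def y_def)
        hence "\<not> A \<subseteq> {i\<in>{1..m}. l i y = b i}" using card_mono[of "{i\<in>{1..m}. l i y = b i}" A] by force
        then obtain i where i: "i\<in>A" "l i y \<noteq> b i" unfolding A_def by auto
        hence "l i u \<noteq> 0" using lval[of i \<epsilon>] by (auto simp: A_def y_def)
        thus ?thesis using nonneg[OF i(1)] i(1) by force
      qed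
    qed
    define A' where "A' = {i\<in>A. l i u = 0}"
    have cardlt: "card A' < card A" using pos finA unfolding A'_def
      by (intro psubset_card_mono) force+
    have ev: "\<forall>\<^sub>F t in at_right 0. \<forall>j\<in>{j\<in>{1..m}. j \<notin> A}. l j x + t * l j u > b j"
    proof (rule eventually_ball_finite)
      show "finite {j\<in>{1..m}. j \<notin> A}" by auto
      show "\<forall>j\<in>{j\<in>{1..m}. j \<notin> A}. \<forall>\<^sub>F t in at_right 0. l j x + t * l j u > b j"
      proof
        fix j assume j: "j \<in> {j\<in>{1..m}. j \<notin> A}"
        have "l j x \<ge> b j" using closure_ge[OF lin less.prems] j by auto
        hence gt: "l j x > b j" using j by (auto simp: A_def)
        have "((\<lambda>t. l j x + t * l j u) \<longlongrightarrow> l j x + 0 * l j u) (at_right 0)"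
          by (intro tendsto_intros)
        thus "\<forall>\<^sub>F t in at_right 0. l j x + t * l j u > b j"
          using gt by (simp add: order_tendstoD(1))
      qed
    qed
    then obtain d where d: "d > 0" "\<forall>t>0. t<d \<longrightarrow> (\<forall>j\<in>{j\<in>{1..m}. j \<notin> A}. l j x + t * l j u > b j)"
      by (auto simp: eventually_at_right_field)
    define t where "t = min (d/2) \<epsilon>"
    have t: "0 < t" "t \<le> \<epsilon>" "t < d" using d \<epsilon> by (auto simp: t_def)
    define x' where "x' = x + t *\<^sub>R u"
    have x'cl: "x' \<in> closure (polytope l b m)" using incl[OF t(1,2)] by (simp add: x'_def)
    have actx': "{i\<in>{1..m}. l i x' = b i} = A'"
    proof (intro set_eqI iffI)
      fix i assume i: "i \<in> {i\<in>{1..m}. l i x' = b i}"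
      show "i \<in> A'"
      proof (cases "i \<in> A")
        case True
        hence "t * l i u = 0" using i lval[of i t] by (auto simp: x'_def A_def)
        thus ?thesis using t True by (auto simp: A'_def)
      next
        case False
        have "b i < l i x + t * l i u" using d(2) t False i by auto
        thus ?thesis using i lval[of i t] by (auto simp: x'_def)
      qed
    next
      fix i assume "i \<in> A'"
      thus "i \<in> {i\<in>{1..m}. l i x' = b i}" using lval[of i t] by (auto simp: A'_def A_def x'_def)
    qed
    have "card {i\<in>{1..m}. l i x' = b i} < card {i\<in>{1..m}. l i x = b i}"
      using actx' cardlt by (simp add: A_def)
    from less.hyps[OF this x'cl] obtain \<rho>0 :: "nat \<Rightarrow> nat" and u0 where IH:
      "\<forall>i\<in>A'. (\<exists>\<theta>\<in>{-1,1::real}. \<exists>e\<in>E. u0 i = \<theta> *\<^sub>R e) \<and> l i (u0 i) > 0 \<and>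
         (\<forall>j\<in>A'. \<rho>0 i \<le> \<rho>0 j \<longrightarrow> l j (u0 i) \<ge> 0)"
      unfolding actx' by blast
    define \<rho> where "\<rho> i = (if i \<in> A' then Suc (\<rho>0 i) else 0)" for i
    define uu where "uu i = (if i \<in> A' then u0 i else u)" for i
    have "\<forall>i\<in>A. (\<exists>\<theta>\<in>{-1,1::real}. \<exists>e\<in>E. uu i = \<theta> *\<^sub>R e) \<and> l i (uu i) > 0 \<and>
     (\<forall>j\<in>A. \<rho> i \<le> \<rho> j \<longrightarrow> l j (uu i) \<ge> 0)"
    proof
      fix i assume iA: "i \<in> A"
      show "(\<exists>\<theta>\<in>{-1,1::real}. \<exists>e\<in>E. uu i = \<theta> *\<^sub>R e) \<and> l i (uu i) > 0 \<and>
        (\<forall>j\<in>A. \<rho> i \<le> \<rho> j \<longrightarrow> l j (uu i) \<ge> 0)"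
      proof (cases "i \<in> A'")
        case True
        have sub: "\<And>j. j \<in> A \<Longrightarrow> \<rho> i \<le> \<rho> j \<Longrightarrow> j \<in> A' \<and> \<rho>0 i \<le> \<rho>0 j"
          using True by (auto simp: \<rho>_def split: if_splits)
        have u0i: "uu i = u0 i" using True by (simp add: uu_def)
        have i1: "\<exists>\<theta>\<in>{-1,1::real}. \<exists>e\<in>E. u0 i = \<theta> *\<^sub>R e" "l i (u0 i) > 0"
          "\<forall>j\<in>A'. \<rho>0 i \<le> \<rho>0 j \<longrightarrow> l j (u0 i) \<ge> 0" using IH True by blast+
        have "\<forall>j\<in>A. \<rho> i \<le> \<rho> j \<longrightarrow> l j (u0 i) \<ge> 0" using i1(3) sub by blast
        thus ?thesis using i1(1,2) unfolding u0i by blast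
      next
        case False
        have "l i u > 0" using nonneg[OF iA] False iA by (auto simp: A'_def)
        moreover have "uu i = \<theta> *\<^sub>R e" using False by (simp add: uu_def u_def)
        ultimately show ?thesis using \<theta> e nonneg unfolding u_def by auto
      qed
    qed
    hence "\<forall>i\<in>{i\<in>{1..m}. l i x = b i}. (\<exists>\<theta>\<in>{-1,1::real}. \<exists>e\<in>E. uu i = \<theta> *\<^sub>R e) \<and> l i (uu i) > 0 \<and>
     (\<forall>j\<in>{i\<in>{1..m}. l i x = b i}. \<rho> i \<le> \<rho> j \<longrightarrow> l j (uu i) \<ge> 0)" unfolding A_def .
    thus ?thesis by (intro exI[of _ \<rho>] exI[of _ uu])
  qed
qed

lemma enum_sorted:
  fixes A :: "nat set" and \<rho> :: "nat \<Rightarrow> nat"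
  assumes "finite A"
  shows "\<exists>idx. bij_betw idx {1..card A} A \<and>
     (\<forall>n\<in>{1..card A}. \<forall>q\<in>{1..card A}. n < q \<longrightarrow> \<rho> (idx n) \<le> \<rho> (idx q))"
proof -
  define xs where "xs = sort_key \<rho> (sorted_list_of_set A)"
  have d: "distinct xs" by (simp add: xs_def)
  have s: "set xs = A" using assms by (simp add: xs_def)
  have len: "length xs = card A" using d s distinct_card by force
  have so: "sorted (map \<rho> xs)" by (simp add: xs_def)
  have b1: "bij_betw ((!) xs) {..<length xs} A" by (rule bij_betw_nth[OF d refl s[symmetric]])
  have b2: "bij_betw (\<lambda>n. n - 1) {1..card A} {..<length xs}"
    unfolding len by (rule bij_betwI[where g="\<lambda>n. n + 1"]) auto
  have bij: "bij_betw (\<lambda>n. xs ! (n - 1)) {1..card A} A"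
    using bij_betw_trans[OF b2 b1] by (simp add: comp_def)
  have mono: "\<rho> (xs ! (n - 1)) \<le> \<rho> (xs ! (q - 1))" if "n\<in>{1..card A}" "q\<in>{1..card A}" "n < q" for n q
    using sorted_nth_mono[OF so, of "n - 1" "q - 1"] that len by auto
  show ?thesis using bij mono by blast
qed

lemma unit_normal_prop:
  fixes f :: "'a::euclidean_space \<Rightarrow> real"
  assumes lf: "linear f" and nz: "f \<noteq> (\<lambda>x. 0)"
  shows "\<exists>c>0. \<forall>v. v \<bullet> unit_normal f = c * f v"
proof -
  define w where "w = adjoint f 1"
  have hw: "f v = v \<bullet> w" for v using adjoint_works[OF lf, of v 1] by (simp add: w_def)
  have wnz: "w \<noteq> 0" using nz hw by auto
  have ex: "\<exists>v. norm v = 1 \<and> (\<forall>y. f y = 0 \<longrightarrow> v \<bullet> y = 0) \<and> f v > 0"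
  proof (intro exI conjI allI impI)
    show "norm (w /\<^sub>R norm w) = 1" using wnz by simp
    fix y assume "f y = 0"
    thus "(w /\<^sub>R norm w) \<bullet> y = 0" using hw[of y] by (simp add: inner_commute)
  next
    have "f (w /\<^sub>R norm w) = (w \<bullet> w) / norm w" using hw by (simp add: divide_inverse mult.commute)
    also have "\<dots> = norm w" using wnz by (simp add: power2_norm_eq_inner[symmetric] power2_eq_square)
    finally show "f (w /\<^sub>R norm w) > 0" using wnz by simp
  qed
  define v where "v = unit_normal f"
  have P: "norm v = 1 \<and> (\<forall>y. f y = 0 \<longrightarrow> v \<bullet> y = 0) \<and> f v > 0"
    unfolding v_def unit_normal_def by (rule someI_ex[OF ex])
  define a where "a = (v \<bullet> w) / (w \<bullet> w)"
  define z where "z = v - a *\<^sub>R w"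
  have ww: "w \<bullet> w > 0" using wnz by simp
  have zw: "z \<bullet> w = 0" using ww by (simp add: z_def a_def inner_diff_left)
  have "f z = 0" using hw zw by simp
  hence vz: "v \<bullet> z = 0" using P by blast
  have "z \<bullet> z = v \<bullet> z - a * (w \<bullet> z)" by (simp add: z_def inner_diff_left)
  also have "\<dots> = 0" using vz zw by (simp add: inner_commute)
  finally have "z = 0" by simp
  hence veq: "v = a *\<^sub>R w" by (simp add: z_def)
  have "f v = a * (w \<bullet> w)" using hw veq by simp
  hence apos: "a > 0" using P ww by (simp add: zero_less_mult_iff)
  have "u \<bullet> v = a * f u" for u using veq hw by (simp add: inner_commute)
  thus ?thesis using apos v_def by auto
qed

theorem lemma1p3:
  fixes l :: "nat \<Rightarrow> 'a::euclidean_space \<Rightarrow> real" and b :: "nat \<Rightarrow> real" and m p :: nat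
    and e :: "nat \<Rightarrow> 'a" and x0 :: 'a
  assumes "DIM('a) \<ge> 2"
    and "\<forall>j\<in>{1..m}. linear (l j)"
    and "\<forall>j\<in>{1..m}. l j \<noteq> (\<lambda>x. 0)"
    and "polytope l b m \<noteq> {}"
    and "bounded (polytope l b m)"
    and "weakly_incoming (e ` {1..p}) l b m"
    and "x0 \<in> closure (polytope l b m)"
  shows "\<exists>r>0. \<exists>I \<subseteq> {1..m}. enat (card I) = cnt l b m x0 \<and>
           polytope l b m \<inter> ball x0 r = ball x0 r \<inter> (\<Inter>i\<in>I. Hplus (l i) (b i)) \<and>
           (\<exists>\<beta> \<theta> idx. (\<forall>n\<in>{1..card I}. \<beta> n \<in> {1..p} \<and> \<theta> n \<in> {-1, 1::real}) \<and>
              bij_betw idx {1..card I} I \<and>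
              (\<forall>n\<in>{1..card I}. strictly_incoming (\<theta> n *\<^sub>R e (\<beta> n)) (l (idx n)) \<and>
                 (\<forall>q\<in>{1..card I}. q > n \<longrightarrow> incoming (\<theta> n *\<^sub>R e (\<beta> n)) (l (idx q)))))"
proof -
  note lin = assms(2) and x0 = assms(7)
  define A where "A = {i\<in>{1..m}. l i x0 = b i}"
  have finA: "finite A" "A \<subseteq> {1..m}" by (auto simp: A_def)
  have cx: "enat (card A) = cnt l b m x0"
  proof (cases "x0 \<in> polytope l b m")
    case True
    hence "A = {}" unfolding A_def polytope_def by force
    thus ?thesis using True by (simp add: cnt_def zero_enat_def)
  qed (use x0 in \<open>simp add: cnt_def A_def\<close>)
  have ge: "l j x0 \<ge> b j" if "j \<in> {1..m}" for j using closure_ge[OF lin x0 that] .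
  define U where "U = (\<Inter>j\<in>{1..m} - A. {y. b j < l j y})"
  have "\<forall>j\<in>{1..m} - A. open {y. b j < l j y}"
  proof
    fix j assume j: "j \<in> {1..m} - A"
    have "continuous_on UNIV (l j)" using lin j
      by (simp add: linear_continuous_on linear_conv_bounded_linear)
    thus "open {y. b j < l j y}" by (intro open_Collect_less continuous_on_const) auto
  qed
  hence "open U" unfolding U_def by (intro open_INT) auto
  moreover have "x0 \<in> U" using ge by (force simp: U_def A_def)
  ultimately obtain r where r: "r > 0" "ball x0 r \<subseteq> U" using open_contains_ball by blast
  have eqset: "polytope l b m \<inter> ball x0 r = ball x0 r \<inter> (\<Inter>i\<in>A. Hplus (l i) (b i))"
  proof (intro set_eqI iffI)
    fix y assume "y \<in> polytope l b m \<inter> ball x0 r"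
    thus "y \<in> ball x0 r \<inter> (\<Inter>i\<in>A. Hplus (l i) (b i))" using finA(2)
      by (auto simp: polytope_def Hplus_def)
  next
    fix y assume y: "y \<in> ball x0 r \<inter> (\<Inter>i\<in>A. Hplus (l i) (b i))"
    hence "y \<in> U" using r by auto
    thus "y \<in> polytope l b m \<inter> ball x0 r" using y
      by (auto simp: polytope_def Hplus_def U_def)
  qed
  obtain \<rho> :: "nat \<Rightarrow> nat" and uu where L: "\<forall>i\<in>A. (\<exists>\<theta>\<in>{-1,1::real}. \<exists>e'\<in>e ` {1..p}. uu i = \<theta> *\<^sub>R e') \<and> l i (uu i) > 0 \<and>
     (\<forall>j\<in>A. \<rho> i \<le> \<rho> j \<longrightarrow> l j (uu i) \<ge> 0)"
    using levels[OF lin assms(6) x0] unfolding A_def by blast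
  have "\<forall>i\<in>A. \<exists>th bt. th \<in> {-1,1::real} \<and> bt \<in> {1..p} \<and> uu i = th *\<^sub>R e bt" using L by blast
  then obtain Th Bt where TB: "\<forall>i\<in>A. Th i \<in> {-1,1::real} \<and> Bt i \<in> {1..p} \<and> uu i = Th i *\<^sub>R e (Bt i)"
    by metis
  obtain idx where idx: "bij_betw idx {1..card A} A"
    "\<forall>n\<in>{1..card A}. \<forall>q\<in>{1..card A}. n < q \<longrightarrow> \<rho> (idx n) \<le> \<rho> (idx q)"
    using enum_sorted[OF finA(1)] by blast
  have idxA: "idx n \<in> A" if "n \<in> {1..card A}" for n by (rule bij_betw_apply[OF idx(1) that])
  have UN: "\<exists>c>0. \<forall>v. v \<bullet> unit_normal (l i) = c * l i v" if "i \<in> A" for i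
  proof -
    have i: "i \<in> {1..m}" using that finA(2) by blast
    show ?thesis using lin assms(3) i by (intro unit_normal_prop) simp_all
  qed
  have nz: "v \<noteq> 0" if "i \<in> A" "l i v > 0" for i v
  proof
    assume "v = 0"
    moreover have "i \<in> {1..m}" using that finA(2) by blast
    ultimately have "l i v = 0" using lin linear_0[of "l i"] by simp
    thus False using that by simp
  qed
  have strict: "strictly_incoming v (l i)" if iA: "i \<in> A" and "l i v > 0" for i v
  proof -
    obtain c where "c > 0" "\<forall>v. v \<bullet> unit_normal (l i) = c * l i v" using UN[OF iA] by blast
    thus ?thesis using nz[OF that] that by (simp add: strictly_incoming_def)
  qed
  have inc: "incoming v (l i)" if iA: "i \<in> A" and "l i v \<ge> 0" "v \<noteq> 0" for i v
  proof -
    obtain c where "c > 0" "\<forall>v. v \<bullet> unit_normal (l i) = c * l i v" using UN[OF iA] by blast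
    thus ?thesis using that by (simp add: incoming_def)
  qed
  have P1: "\<forall>n\<in>{1..card A}. Bt (idx n) \<in> {1..p} \<and> Th (idx n) \<in> {-1,1}"
    using TB idxA by blast
  have P2: "\<forall>n\<in>{1..card A}. strictly_incoming (Th (idx n) *\<^sub>R e (Bt (idx n))) (l (idx n)) \<and>
     (\<forall>q\<in>{1..card A}. q > n \<longrightarrow> incoming (Th (idx n) *\<^sub>R e (Bt (idx n))) (l (idx q)))"
  proof (intro ballI conjI impI)
    fix n assume n: "n \<in> {1..card A}"
    have eq: "Th (idx n) *\<^sub>R e (Bt (idx n)) = uu (idx n)" using TB idxA[OF n] by auto
    have Ln: "\<forall>j\<in>A. \<rho> (idx n) \<le> \<rho> j \<longrightarrow> l j (uu (idx n)) \<ge> 0" "l (idx n) (uu (idx n)) > 0"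
      using L idxA[OF n] by blast+
    show "strictly_incoming (Th (idx n) *\<^sub>R e (Bt (idx n))) (l (idx n))"
      unfolding eq by (rule strict[OF idxA[OF n] Ln(2)])
    fix q assume q: "q \<in> {1..card A}" "n < q"
    have "\<rho> (idx n) \<le> \<rho> (idx q)" using idx(2) n q by blast
    hence "l (idx q) (uu (idx n)) \<ge> 0" using Ln(1) idxA[OF q(1)] by blast
    moreover have "uu (idx n) \<noteq> 0" using nz[OF idxA[OF n] Ln(2)] .
    ultimately show "incoming (Th (idx n) *\<^sub>R e (Bt (idx n))) (l (idx q))"
      unfolding eq by (rule inc[OF idxA[OF q(1)]])
  qed
  show ?thesis
    apply (rule exI[of _ r], rule conjI, rule r(1))
    apply (rule exI[of _ A], rule conjI, rule finA(2))
    apply (intro conjI cx eqset)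
    apply (rule exI[of _ "\<lambda>n. Bt (idx n)"], rule exI[of _ "\<lambda>n. Th (idx n)"], rule exI[of _ idx])
    using P1 P2 idx(1) by blast
qed

end
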